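(* Let $n \geq 2$, let $(x_1,\dots,x_{n+1})$ be the standard coordinates on $\mathbb{R}^{n+1}_1$, and let $F:\mathbb{R}^{n+1}\to\mathbb{R}^{n+1}$, $(y_1,\dots,y_{n+1}) = F(x_1,\dots,x_{n+1})$, be a smooth diffeomorphism, so that $(y_1,\dots,y_{n+1})$ is another (global) coordinate system on $\mathbb{R}^{n+1}_1$. Assume that for every smooth function $\varphi$ on $\mathbb{R}^{n+1}$, $$\sum_{i=1}^n \frac{\partial^2 \varphi}{\partial x_i^2} - \frac{\partial^2 \varphi}{\partial x_{n+1}^2} = 0 \ \text{ everywhere} \iff \sum_{i=1}^n \frac{\partial^2 \varphi}{\partial y_i^2} - \frac{\partial^2 \varphi}{\partial y_{n+1}^2} = 0 \ \text{ everywhere},$$ where in the right-hand side $\varphi$ is expressed in the $y$-coordinates (i.e. one considers $\varphi\circ F^{-1}$ as a function of $y$). For $i=1,\dots,n+1$ let $r_i = \big(\frac{\partial y_i}{\partial x_1},\dots,\frac{\partial y_i}{\partial x_{n+1}}\big)$ be the $i$-th row of the Jacobian matrix $\big(\frac{\partial y_i}{\partial x_j}\big)$. Then at every point: the rows are mutually orthogonal with respect to the Minkowski inner product, i.e. $\langle r_i, r_j\rangle = 0$ for $i \neq j$; they all have the same length, namely $\langle r_i,r_i\rangle = -\langle r_{n+1},r_{n+1}\rangle$ for $1\le i\le n$; and $r_1,\dots,r_n$ are spacelike while $r_{n+1}$ is timelike.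
   Context: $\mathbb{R}^{n+1}_1$ denotes $\mathbb{R}^{n+1}$ with the Minkowski inner product of signature $(+,\dots,+,-)$: $\langle u,v\rangle = \sum_{i=1}^n u_i v_i - u_{n+1}v_{n+1}$. A vector $v$ is spacelike if $\langle v,v\rangle>0$ (or $v=0$), timelike if $\langle v,v\rangle<0$, null if $\langle v,v\rangle = 0$, $v\neq 0$. *)

theory Defs
  imports "HOL-Analysis.Analysis"
begin

text \<open>C-infinity smoothness on the whole space: f is differentiable everywhere and
  every directional-derivative function x |-> Df(x) v is again smooth.\<close>
coinductive smooth :: "('a::real_normed_vector \<Rightarrow> 'b::real_normed_vector) \<Rightarrow> bool" where
  smoothI: "(\<forall>x. f differentiable (at x)) \<Longrightarrow>
            (\<forall>v. smooth (\<lambda>x. frechet_derivative f (at x) v)) \<Longrightarrow> smooth f"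

definition pd :: "'m::finite \<Rightarrow> (real^'m \<Rightarrow> 'b::real_normed_vector) \<Rightarrow> real^'m \<Rightarrow> 'b" where
  "pd i f x = frechet_derivative f (at x) (axis i 1)"

definition mink :: "'m::finite \<Rightarrow> real^'m \<Rightarrow> real^'m \<Rightarrow> real" where
  "mink t u v = (\<Sum>j\<in>UNIV. (if j = t then -1 else 1) * u $ j * v $ j)"

definition spacelike :: "'m::finite \<Rightarrow> real^'m \<Rightarrow> bool" where
  "spacelike t v \<longleftrightarrow> mink t v v > 0 \<or> v = 0"

definition timelike :: "'m::finite \<Rightarrow> real^'m \<Rightarrow> bool" where
  "timelike t v \<longleftrightarrow> mink t v v < 0"

definition wave :: "'m::finite \<Rightarrow> (real^'m \<Rightarrow> real) \<Rightarrow> real^'m \<Rightarrow> real" where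
  "wave t \<phi> x = (\<Sum>i\<in>UNIV. (if i = t then -1 else 1) * pd i (pd i \<phi>) x)"

definition jrow :: "(real^'m::finite \<Rightarrow> real^'m) \<Rightarrow> 'm \<Rightarrow> real^'m \<Rightarrow> real^'m" where
  "jrow F i x = (\<chi> j. pd j (\<lambda>z. F z $ i) x)"

end

theory Submission
  imports Defs
begin


lemma smoothD: "smooth f \<Longrightarrow> (\<forall>x. f differentiable (at x)) \<and> (\<forall>v. smooth (\<lambda>x. frechet_derivative f (at x) v))"
  by (erule smooth.cases) auto

lemma pd_eq: "(\<And>x. (f has_derivative f' x) (at x)) \<Longrightarrow> pd i f = (\<lambda>x. f' x (axis i 1))"
  unfolding pd_def by (rule ext) (metis frechet_derivative_at)

lemma quad_der: "((\<lambda>x::real^'m. a + b\<bullet>x + (c\<bullet>x)*(d\<bullet>x)) has_derivative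
   (\<lambda>v. b\<bullet>v + ((c\<bullet>x)*(d\<bullet>v) + (c\<bullet>v)*(d\<bullet>x)))) (at x)"
  by (auto intro!: derivative_eq_intros)

lemma quad_smooth: "smooth (\<lambda>x::real^'m. a + b\<bullet>x + (c\<bullet>x)*(d\<bullet>x))"
proof -
  let ?X = "\<lambda>f. \<exists>a b c d. f = (\<lambda>x::real^'m. a + b\<bullet>x + (c\<bullet>x)*(d\<bullet>x))"
  have "?X (\<lambda>x::real^'m. a + b\<bullet>x + (c\<bullet>x)*(d\<bullet>x))" by blast
  then show ?thesis
  proof (rule smooth.coinduct[of ?X])
    fix f assume "?X f"
    then obtain a b c d where f: "f = (\<lambda>x::real^'m. a + b\<bullet>x + (c\<bullet>x)*(d\<bullet>x))" by blast
    have D: "\<And>x. frechet_derivative f (at x) = (\<lambda>v. b\<bullet>v + ((c\<bullet>x)*(d\<bullet>v) + (c\<bullet>v)*(d\<bullet>x)))"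
      unfolding f by (rule frechet_derivative_at[symmetric], rule quad_der)
    have "\<forall>x. f differentiable at x" unfolding f by (intro allI differentiableI, rule quad_der)
    moreover have "\<forall>v. ?X (\<lambda>x. frechet_derivative f (at x) v)"
    proof
      fix v
      show "?X (\<lambda>x. frechet_derivative f (at x) v)"
        apply (rule exI[of _ "b\<bullet>v"], rule exI[of _ "(d\<bullet>v) *\<^sub>R c + (c\<bullet>v) *\<^sub>R d"],
               rule exI[of _ 0], rule exI[of _ 0])
        unfolding D by (rule ext) (simp add: inner_add_left mult.commute)
    qed
    ultimately show "\<exists>g. f = g \<and> (\<forall>x. g differentiable at x) \<and> (\<forall>v. ?X (\<lambda>x. frechet_derivative g (at x) v) \<or> smooth (\<lambda>x. frechet_derivative g (at x) v))" by blast
  qed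
qed

lemma lin_pd: "pd i (\<lambda>x::real^'m. k \<bullet> x) = (\<lambda>x. k $ i)"
proof -
  have "pd i (\<lambda>x::real^'m. k \<bullet> x) = (\<lambda>x. k \<bullet> axis i 1)"
    by (rule pd_eq) (auto intro!: derivative_eq_intros)
  then show ?thesis by (simp add: inner_axis)
qed

lemma const_pd: "pd i (\<lambda>x::real^'m. c::real) = (\<lambda>x. 0)"
  by (rule pd_eq[where f'="\<lambda>x v. 0", simplified]) (rule has_derivative_const)

lemma lin_wave: "wave t (\<lambda>x::real^'m. k \<bullet> x) x = 0"
  unfolding wave_def lin_pd const_pd by simp

lemma quad_wave: "wave t (\<lambda>x::real^'m. (k \<bullet> x) * (k \<bullet> x)) x = 2 * mink t k k"
proof -
  have 1: "pd i (\<lambda>x::real^'m. (k \<bullet> x) * (k \<bullet> x)) = (\<lambda>x. (k\<bullet>x) * k $ i + k $ i * (k \<bullet> x))" for i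
  proof -
    have "pd i (\<lambda>x::real^'m. (k \<bullet> x) * (k \<bullet> x)) = (\<lambda>x. (k\<bullet>x) * (k \<bullet> axis i 1) + (k \<bullet> axis i 1) * (k \<bullet> x))"
      by (rule pd_eq) (auto intro!: derivative_eq_intros)
    then show ?thesis by (simp add: inner_axis)
  qed
  have 2: "pd i (\<lambda>x::real^'m. (k\<bullet>x) * k $ i + k $ i * (k \<bullet> x)) = (\<lambda>x. 2 * (k $ i * k $ i))" for i
  proof -
    have "pd i (\<lambda>x::real^'m. (k\<bullet>x) * k $ i + k $ i * (k \<bullet> x)) = (\<lambda>x. (k \<bullet> axis i 1) * k $ i + k $ i * (k \<bullet> axis i 1))"
      by (rule pd_eq) (auto intro!: derivative_eq_intros)
    then show ?thesis by (simp add: inner_axis)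
  qed
  show ?thesis unfolding wave_def mink_def 1 2
    by (simp add: sum_distrib_left algebra_simps)
qed

lemma G_facts:
  fixes G :: "real^'m::finite \<Rightarrow> real^'m"
  assumes "smooth G"
  shows "(G has_derivative frechet_derivative G (at y)) (at y)"
    and "((\<lambda>y. frechet_derivative G (at y) v) has_derivative
          frechet_derivative (\<lambda>y. frechet_derivative G (at y) v) (at y)) (at y)"
proof -
  from smoothD[OF assms] have a: "\<forall>x. G differentiable at x"
    and b: "smooth (\<lambda>x. frechet_derivative G (at x) v)" by auto
  show "(G has_derivative frechet_derivative G (at y)) (at y)"
    using a frechet_derivative_works by blast
  from smoothD[OF b] show "((\<lambda>y. frechet_derivative G (at y) v) has_derivative
          frechet_derivative (\<lambda>y. frechet_derivative G (at y) v) (at y)) (at y)"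
    using frechet_derivative_works by blast
qed

lemma G_wave_lin:
  fixes G :: "real^'m::finite \<Rightarrow> real^'m"
  assumes sG: "smooth G"
  defines "g \<equiv> \<lambda>i y. frechet_derivative G (at y) (axis i 1)"
  defines "Dg \<equiv> \<lambda>i y. frechet_derivative (g i) (at y) (axis i 1)"
  shows "wave t (\<lambda>y. k \<bullet> G y) y = (\<Sum>i\<in>UNIV. (if i = t then -1 else 1) * (k \<bullet> Dg i y))"
proof -
  have 1: "pd i (\<lambda>y. k \<bullet> G y) = (\<lambda>y. k \<bullet> g i y)" for i
    unfolding g_def
    by (rule pd_eq) (auto intro!: derivative_eq_intros G_facts[OF sG])
  have 2: "pd i (\<lambda>y. k \<bullet> g i y) = (\<lambda>y. k \<bullet> Dg i y)" for i
    unfolding Dg_def g_def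
    by (rule pd_eq) (auto intro!: derivative_eq_intros G_facts[OF sG])
  show ?thesis unfolding wave_def 1 2 ..
qed

lemma G_wave_quad:
  fixes G :: "real^'m::finite \<Rightarrow> real^'m"
  assumes sG: "smooth G"
  defines "g \<equiv> \<lambda>i y. frechet_derivative G (at y) (axis i 1)"
  defines "Dg \<equiv> \<lambda>i y. frechet_derivative (g i) (at y) (axis i 1)"
  shows "wave t (\<lambda>y. (k \<bullet> G y) * (k \<bullet> G y)) y = 2 * (k \<bullet> G y) * wave t (\<lambda>y. k \<bullet> G y) y
     + 2 * (\<Sum>i\<in>UNIV. (if i = t then -1 else 1) * (k \<bullet> g i y) * (k \<bullet> g i y))"
proof -
  have 1: "pd i (\<lambda>y. (k \<bullet> G y) * (k \<bullet> G y)) = (\<lambda>y. (k \<bullet> G y) * (k \<bullet> g i y) + (k \<bullet> g i y) * (k \<bullet> G y))" for i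
    unfolding g_def
    by (rule pd_eq) (auto intro!: derivative_eq_intros G_facts[OF sG])
  have 2: "pd i (\<lambda>y. (k \<bullet> G y) * (k \<bullet> g i y) + (k \<bullet> g i y) * (k \<bullet> G y)) = 
     (\<lambda>y. (k \<bullet> G y) * (k \<bullet> Dg i y) + (k \<bullet> g i y) * (k \<bullet> g i y) + ((k \<bullet> Dg i y) * (k \<bullet> G y) + (k \<bullet> g i y) * (k \<bullet> g i y)))" for i
    unfolding Dg_def g_def
    by (rule pd_eq) (auto intro!: derivative_eq_intros G_facts[OF sG])
  have 3: "wave t (\<lambda>y. k \<bullet> G y) y = (\<Sum>i\<in>UNIV. (if i = t then -1 else 1) * (k \<bullet> Dg i y))"
    unfolding Dg_def g_def by (rule G_wave_lin[OF sG])
  show ?thesis unfolding 3 unfolding wave_def 1 2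
    by (simp add: sum_distrib_left sum.distrib[symmetric] algebra_simps)
qed


lemma mink_add_left: "mink t (u + v) w = mink t u w + mink t v w"
  unfolding mink_def by (simp add: algebra_simps sum.distrib)
lemma mink_add_right: "mink t w (u + v) = mink t w u + mink t w v"
  unfolding mink_def by (simp add: algebra_simps sum.distrib)
lemma mink_diff_left: "mink t (u - v) w = mink t u w - mink t v w"
  unfolding mink_def by (simp add: algebra_simps sum_subtractf)
lemma mink_diff_right: "mink t w (u - v) = mink t w u - mink t w v"
  unfolding mink_def by (simp add: algebra_simps sum_subtractf)
lemma mink_scale_left: "mink t (c *\<^sub>R u) w = c * mink t u w"
  unfolding mink_def by (simp add: algebra_simps sum_distrib_left)
lemma mink_scale_right: "mink t w (c *\<^sub>R u) = c * mink t w u"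
  unfolding mink_def by (simp add: algebra_simps sum_distrib_left)
lemma mink_sym: "mink t u v = mink t v u"
  unfolding mink_def by (simp add: algebra_simps)
lemma mink_axis: "mink t (axis p 1) (axis q 1) = (if p = q then (if p = t then -1 else 1) else 0)"
proof -
  have "\<And>j. (if j = t then -1 else 1) * axis p 1 $ j * axis q 1 $ j = (if j = p then (if p = q then (if p = t then -1 else 1) else 0) else (0::real))"
    by (simp add: axis_def)
  then show ?thesis unfolding mink_def by simp
qed

lemmas mink_simps = mink_add_left mink_add_right mink_scale_left mink_scale_right mink_axis

lemma null3: "a \<noteq> t \<Longrightarrow> b \<noteq> t \<Longrightarrow> a \<noteq> b \<Longrightarrow>
  mink t (axis t 1 + c *\<^sub>R axis a 1 + d *\<^sub>R axis b 1) (axis t 1 + c *\<^sub>R axis a 1 + d *\<^sub>R axis b 1) = -1 + c*c + d*d"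
  by (simp add: mink_simps)

lemma null2: "a \<noteq> t \<Longrightarrow> 
  mink t (axis t 1 + c *\<^sub>R axis a 1) (axis t 1 + c *\<^sub>R axis a 1) = -1 + c*c"
  by (simp add: mink_simps)

lemma Qexp3: "(\<Sum>i\<in>A. e i * (x i + c * y i + d * z i) * (x i + c * y i + d * z i)) =
  (\<Sum>i\<in>A. e i * x i * x i) + c*c*(\<Sum>i\<in>A. e i * y i * y i) + d*d*(\<Sum>i\<in>A. e i * z i * z i)
  + 2*c*(\<Sum>i\<in>A. e i * x i * y i) + 2*d*(\<Sum>i\<in>A. e i * x i * z i) + 2*c*d*(\<Sum>i\<in>A. (e i * y i * z i::real))"
proof -
  have "\<And>i. e i * (x i + c * y i + d * z i) * (x i + c * y i + d * z i) =
    e i * x i * x i + c*c*(e i * y i * y i) + d*d*(e i * z i * z i)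
  + 2*c*(e i * x i * y i) + 2*d*(e i * x i * z i) + 2*c*d*(e i * y i * z i)" by algebra
  then show ?thesis by (simp add: sum.distrib sum_distrib_left)
qed

lemma Qexp2: "(\<Sum>i\<in>A. e i * (x i + c * y i) * (x i + c * y i)) =
  (\<Sum>i\<in>A. e i * x i * x i) + c*c*(\<Sum>i\<in>A. e i * y i * y i) + 2*c*(\<Sum>i\<in>A. (e i * x i * y i::real))"
proof -
  have "\<And>i. e i * (x i + c * y i) * (x i + c * y i) =
    e i * x i * x i + c*c*(e i * y i * y i) + 2*c*(e i * x i * y i)" by algebra
  then show ?thesis by (simp add: sum.distrib sum_distrib_left)
qed

lemma conformal_alg:
  fixes g :: "'m::finite \<Rightarrow> real^'m" and t :: 'm
  defines "S \<equiv> \<lambda>a b. \<Sum>i\<in>UNIV. (if i = t then -1 else 1) * g i $ a * g i $ b"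
  assumes Q: "\<And>k. mink t k k = 0 \<Longrightarrow> (\<Sum>i\<in>UNIV. (if i = t then -1 else 1) * (k \<bullet> g i) * (k \<bullet> g i)) = 0"
  shows "S a b = - S t t * (if a = b then (if a = t then -1 else 1) else 0)"
proof -
  have 2: "S t t + c*c*S a a + 2*c*S t a = 0" if "a \<noteq> t" "c*c = 1" for a c
  proof -
    let ?k = "axis t 1 + c *\<^sub>R axis a 1"
    have n: "mink t ?k ?k = 0" using null2[OF \<open>a \<noteq> t\<close>] that by simp
    have ip: "?k \<bullet> g i = g i $ t + c * g i $ a" for i by (simp add: inner_add_left inner_axis')
    show ?thesis using Q[OF n] unfolding ip Qexp2 S_def by simp
  qed
  have 3: "S t t + c*c*S a a + d*d*S b b + 2*c*S t a + 2*d*S t b + 2*c*d*S a b = 0"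
    if "a \<noteq> t" "b \<noteq> t" "a \<noteq> b" "c*c + d*d = 1" for a b c d
  proof -
    let ?k = "axis t 1 + c *\<^sub>R axis a 1 + d *\<^sub>R axis b 1"
    have n: "mink t ?k ?k = 0" using null3[OF that(1-3)] that(4) by simp
    have ip: "?k \<bullet> g i = g i $ t + c * g i $ a + d * g i $ b" for i by (simp add: inner_add_left inner_axis')
    show ?thesis using Q[OF n] unfolding ip Qexp3 S_def by simp
  qed
  have ta: "S t a = 0" "S a a = - S t t" if "a \<noteq> t" for a
    using 2[OF that, of 1] 2[OF that, of "-1"] by simp_all
  have ab: "S a b = 0" if "a \<noteq> t" "b \<noteq> t" "a \<noteq> b" for a b
    using 3[OF that, of "3/5" "4/5"] ta[OF that(1)] ta[OF that(2)] by simp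
  have sym: "S a b = S b a" for a b unfolding S_def by (simp add: mult_ac)
  show ?thesis
  proof (cases "a = t")
    case True
    then show ?thesis
    proof (cases "b = t")
      case False
      then show ?thesis using True ta(1)[OF False] by simp
    qed simp
  next
    case False
    then show ?thesis
    proof (cases "b = t")
      case True
      then show ?thesis using False ta(1)[OF False] sym[of a t] by simp
    next
      case bF: False
      then show ?thesis using False ta(2)[OF False] ab[OF False bF] by (cases "a = b") simp_all
    qed
  qed
qed

lemma mink_nonneg: "w $ t = 0 \<Longrightarrow> mink t w w \<ge> 0"
  unfolding mink_def by (rule sum_nonneg) auto

lemma no_two_timelike:
  assumes u: "mink t u u < 0" and v: "mink t v v < 0" and uv: "mink t u v = 0"
  shows False
proof (cases "u $ t = 0")
  case True then show False using mink_nonneg[of u t] u by simp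
next
  case False
  let ?w = "(v $ t) *\<^sub>R u - (u $ t) *\<^sub>R v"
  have "?w $ t = 0" by (simp add: mult.commute)
  then have ge: "mink t ?w ?w \<ge> 0" by (rule mink_nonneg)
  have eq: "mink t ?w ?w = (v$t)*(v$t) * mink t u u + (u$t)*(u$t) * mink t v v"
    using uv by (simp add: mink_diff_left mink_diff_right mink_scale_left mink_scale_right mink_sym[of t v u] algebra_simps)
  have "(u$t)*(u$t) * mink t v v < 0" proof -
    have "(u$t)*(u$t) > 0" using False by (simp add: zero_less_mult_iff) linarith
    then show ?thesis using v by (simp add: mult_pos_neg)
  qed
  moreover have "(v$t)*(v$t) * mink t u u \<le> 0" using u by (simp add: mult_nonneg_nonpos)
  ultimately show False using ge eq by linarith
qed



lemma inv_conf:
  fixes P M :: "'m::finite \<Rightarrow> 'm \<Rightarrow> real" and e :: "'m \<Rightarrow> real"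
  assumes PM: "\<And>i j. (\<Sum>l\<in>UNIV. P i l * M l j) = (if i = j then 1 else 0)"
    and SM: "\<And>a b. (\<Sum>j\<in>UNIV. e j * M a j * M b j) = c * (if a = b then e a else 0)"
  shows "c * (\<Sum>l\<in>UNIV. e l * P i l * P k l) = (if i = k then e i else 0)"
proof -
  have "(if i = k then e i else 0) = (\<Sum>j\<in>UNIV. e j * (if i = j then 1 else 0) * (if k = j then 1 else 0))"
  proof -
    have "\<And>j. e j * (if i = j then 1 else 0) * (if k = j then 1 else 0) = (if j = i then (if i = k then e i else 0) else 0)"
      by auto
    then show ?thesis by simp
  qed
  also have "\<dots> = (\<Sum>j\<in>UNIV. e j * (\<Sum>a\<in>UNIV. P i a * M a j) * (\<Sum>b\<in>UNIV. P k b * M b j))"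
    by (simp add: PM)
  also have "\<dots> = (\<Sum>j\<in>UNIV. \<Sum>a\<in>UNIV. \<Sum>b\<in>UNIV. P i a * P k b * (e j * M a j * M b j))"
    by (simp add: sum_product sum_distrib_left mult_ac)
  also have "\<dots> = (\<Sum>a\<in>UNIV. \<Sum>b\<in>UNIV. \<Sum>j\<in>UNIV. P i a * P k b * (e j * M a j * M b j))"
    by (subst sum.swap, subst (2) sum.swap, rule refl)
  also have "\<dots> = (\<Sum>a\<in>UNIV. \<Sum>b\<in>UNIV. P i a * P k b * (c * (if a = b then e a else 0)))"
    by (simp add: sum_distrib_left[symmetric] SM)
  also have "\<dots> = c * (\<Sum>l\<in>UNIV. e l * P i l * P k l)"
    by (simp add: if_distrib if_distribR sum_distrib_left mult_ac cong: if_cong)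
  finally show ?thesis ..
qed


lemma three: "CARD('m::finite) \<ge> 3 \<Longrightarrow> \<exists>a b::'m. a \<noteq> t \<and> b \<noteq> t \<and> a \<noteq> b"
proof -
  assume h: "CARD('m) \<ge> 3"
  have "card (UNIV - {t}) \<ge> 2" using h by (simp add: card_Diff_singleton)
  then have "UNIV - {t} \<noteq> {}" by (metis card.empty not_numeral_le_zero)
  then obtain a where a: "a \<noteq> t" by auto
  have "card (UNIV - {t} - {a}) \<ge> 1" using \<open>card (UNIV - {t}) \<ge> 2\<close> a by (simp add: card_Diff_singleton)
  then have "UNIV - {t} - {a} \<noteq> {}" by (metis card.empty not_one_le_zero)
  then obtain b where "b \<noteq> t" "b \<noteq> a" by auto
  then show ?thesis using a by blast
qed

theorem theorem2p1:
  fixes F G :: "real^'m::finite \<Rightarrow> real^'m" and t :: 'm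
  assumes dim: "CARD('m) \<ge> 3"
    and smF: "smooth F" and smG: "smooth G"
    and inv1: "\<forall>x. G (F x) = x" and inv2: "\<forall>y. F (G y) = y"
    and wave_pres: "\<forall>\<phi> :: real^'m \<Rightarrow> real. smooth \<phi> \<longrightarrow>
        ((\<forall>x. wave t \<phi> x = 0) \<longleftrightarrow> (\<forall>y. wave t (\<phi> \<circ> G) y = 0))"
  shows "\<forall>x.
     (\<forall>i j. i \<noteq> j \<longrightarrow> mink t (jrow F i x) (jrow F j x) = 0) \<and>
     (\<forall>i. i \<noteq> t \<longrightarrow> mink t (jrow F i x) (jrow F i x) = - mink t (jrow F t x) (jrow F t x)) \<and>
     (\<forall>i. i \<noteq> t \<longrightarrow> spacelike t (jrow F i x)) \<and>
     timelike t (jrow F t x)"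
proof
  fix x
  define y where "y = F x"
  have Gy: "G y = x" using inv1 y_def by simp
  define g where "g = (\<lambda>i. frechet_derivative G (at y) (axis i 1))"
  have linsm: "smooth (\<lambda>x::real^'m. k \<bullet> x)" for k
    using quad_smooth[of 0 k 0 0] by simp
  have quadsm: "smooth (\<lambda>x::real^'m. (k \<bullet> x) * (k \<bullet> x))" for k
    using quad_smooth[of 0 0 k k] by simp
  have hw: "wave t (\<lambda>y. k \<bullet> G y) z = 0" for k z
  proof -
    have "\<forall>z. wave t ((\<lambda>x. k \<bullet> x) \<circ> G) z = 0"
      using wave_pres linsm[of k] lin_wave[of t k] by blast
    then show ?thesis by (simp add: o_def)
  qed
  have Qz: "(\<Sum>i\<in>UNIV. (if i = t then -1 else 1) * (k \<bullet> g i) * (k \<bullet> g i)) = 0" if "mink t k k = 0" for k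
  proof -
    have "\<forall>z. wave t ((\<lambda>x. (k \<bullet> x) * (k \<bullet> x)) \<circ> G) z = 0"
      using wave_pres quadsm[of k] quad_wave[of t k] that by auto
    then have "wave t (\<lambda>y. (k \<bullet> G y) * (k \<bullet> G y)) y = 0" by (simp add: o_def)
    then show ?thesis using G_wave_quad[OF smG, of t k y] hw[of k y] unfolding g_def by simp
  qed
  define S where "S = (\<lambda>a b. \<Sum>i\<in>UNIV. (if i = t then -1 else 1) * g i $ a * g i $ b)"
  have Seq: "S a b = - S t t * (if a = b then (if a = t then -1 else 1) else 0)" for a b
    unfolding S_def by (rule conformal_alg[of t g, OF Qz])
  define c where "c = - S t t"
  have Fd: "F differentiable at z" for z using smoothD[OF smF] by blast
  have Gd: "G differentiable at z" for z using smoothD[OF smG] by blast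
  define F' where "F' = frechet_derivative F (at x)"
  have F'der: "(F has_derivative F') (at x)" unfolding F'_def using Fd frechet_derivative_works by blast
  have F'lin: "linear F'" using has_derivative_linear[OF F'der] .
  have FG: "F \<circ> G = id" using inv2 by (auto simp: fun_eq_iff)
  have chain: "F' (g j) = axis j 1" for j
  proof -
    have "frechet_derivative (F \<circ> G) (at y) = frechet_derivative F (at (G y)) \<circ> frechet_derivative G (at y)"
      by (rule frechet_derivative_compose[OF Gd Fd])
    then have "id = F' \<circ> frechet_derivative G (at y)" unfolding FG F'_def Gy by simp
    then show ?thesis unfolding g_def by (metis id_apply o_apply)
  qed
  define P where "P = (\<lambda>i l. jrow F i x $ l)"
  have Pe: "P i l = F' (axis l 1) $ i" for i l
  proof -
    have "((\<lambda>z. F z $ i) has_derivative (\<lambda>v. F' v $ i)) (at x)"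
      using bounded_linear.has_derivative[OF bounded_linear_vec_nth F'der] .
    then have "frechet_derivative (\<lambda>z. F z $ i) (at x) = (\<lambda>v. F' v $ i)"
      by (rule frechet_derivative_at[symmetric])
    then show ?thesis unfolding P_def jrow_def pd_def by simp
  qed
  define M where "M = (\<lambda>a j. g j $ a)"
  have PM: "(\<Sum>l\<in>UNIV. P i l * M l j) = (if i = j then 1 else 0)" for i j
  proof -
    have vl: "Vector_Spaces.linear (*s) (*s) F'" using F'lin by (simp add: linear_def scalar_mult_eq_scaleR)
    have "F' (g j) $ i = (\<Sum>l\<in>UNIV. g j $ l * F' (axis l 1) $ i)"
      by (rule Cartesian_Space.linear_componentwise[OF vl])
    then show ?thesis unfolding Pe M_def chain by (simp add: mult.commute axis_def)
  qed
  have SM: "(\<Sum>j\<in>UNIV. (if j = t then -1 else 1) * M a j * M b j) = c * (if a = b then (if a = t then -1 else 1) else 0)" for a b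
    using Seq[of a b] unfolding c_def S_def M_def by simp
  define R where "R = (\<lambda>i k. mink t (jrow F i x) (jrow F k x))"
  have R: "c * R i k = (if i = k then (if i = t then -1 else 1) else 0)" for i k
  proof -
    have "R i k = (\<Sum>l\<in>UNIV. (if l = t then -1 else 1) * P i l * P k l)"
      unfolding R_def mink_def P_def ..
    then show ?thesis using inv_conf[OF PM SM, of i k] by simp
  qed
  have c0: "c \<noteq> 0" using R[of t t] by auto
  have cpos: "c > 0"
  proof (rule ccontr)
    assume "\<not> c > 0"
    with c0 have cn: "c < 0" by simp
    obtain a b where ab: "a \<noteq> t" "b \<noteq> t" "a \<noteq> b" using three[OF dim] by blast
    have "c * R a a = 1" using R[of a a] ab by simp
    then have "R a a < 0" using cn by (smt (verit) mult_nonpos_nonneg)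
    moreover have "c * R b b = 1" using R[of b b] ab by simp
    then have "R b b < 0" using cn by (smt (verit) mult_nonpos_nonneg)
    moreover have "R a b = 0" using R[of a b] ab c0 by simp
    ultimately show False unfolding R_def by (rule no_two_timelike)
  qed
  have Rd: "R i k = (if i = k then (if i = t then -1 else 1) else 0) / c" for i k
    using R[of i k] c0 by (simp add: field_simps)
  show "(\<forall>i j. i \<noteq> j \<longrightarrow> mink t (jrow F i x) (jrow F j x) = 0) \<and>
     (\<forall>i. i \<noteq> t \<longrightarrow> mink t (jrow F i x) (jrow F i x) = - mink t (jrow F t x) (jrow F t x)) \<and>
     (\<forall>i. i \<noteq> t \<longrightarrow> spacelike t (jrow F i x)) \<and>
     timelike t (jrow F t x)"
  proof (intro conjI allI impI)
    fix i j :: 'm assume "i \<noteq> j"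
    then show "mink t (jrow F i x) (jrow F j x) = 0" using Rd[of i j] unfolding R_def by simp
  next
    fix i assume "i \<noteq> t"
    then show "mink t (jrow F i x) (jrow F i x) = - mink t (jrow F t x) (jrow F t x)"
      using Rd[of i i] Rd[of t t] unfolding R_def by simp
  next
    fix i assume "i \<noteq> t"
    then show "spacelike t (jrow F i x)"
      using Rd[of i i] cpos unfolding R_def spacelike_def by simp
  next
    show "timelike t (jrow F t x)"
      using Rd[of t t] cpos unfolding R_def timelike_def by simp
  qed
qed

end
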